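(* Fix $a\ge0$ and $0\le\alpha\le\beta$, and let $\rho(x)=1+x^2$. Then for every $f\in C_\rho^k[0,\infty)$, $$\lim_{n\to\infty}\left\|T_{n,a}^{\alpha,\beta}(f;\cdot)-f\right\|_\rho=\lim_{n\to\infty}\sup_{x\ge0}\frac{|T_{n,a}^{\alpha,\beta}(f;x)-f(x)|}{1+x^2}=0.$$
   Context: Fix $a\ge 0$ and real numbers $\alpha,\beta$ with $0\le\alpha\le\beta$. For $n\in\mathbb N=\{1,2,\dots\}$ let $(n)_0=1$, $(n)_i=n(n+1)\cdots(n+i-1)$, and $p_k(n,a)=\sum_{i=0}^{k}\binom{k}{i}(n)_i a^{k-i}$. For $x\ge0$ and $k=0,1,2,\dots$ put $W_{n,k}^a(x)=e^{-\frac{ax}{1+x}}\frac{p_k(n,a)}{k!}\frac{x^k}{(1+x)^{k+n}}$ (so that $\sum_{k\ge0}W_{n,k}^a(x)=1$). The generalized Baskakov–Kantorovich–Stancu operator is $T_{n,a}^{\alpha,\beta}(f;x)=(n+\beta)\sum_{k=0}^{\infty}W_{n,k}^a(x)\int_{\frac{k+\alpha}{n+\beta}}^{\frac{k+\alpha+1}{n+\beta}}f(t)\,dt$. With the weight $\rho(x)=1+x^2$: $B_\rho[0,\infty)$ is the set of functions $f$ on $[0,\infty)$ with $|f(x)|\le M_f\rho(x)$ for all $x\ge0$ and some constant $M_f$; $C_\rho[0,\infty)$ is the set of continuous functions in $B_\rho[0,\infty)$, normed by $\|f\|_\rho=\sup_{x\ge0}|f(x)|/\rho(x)$; and $C_\rho^k[0,\infty)$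 is the set of $f\in C_\rho[0,\infty)$ for which $\lim_{x\to\infty}f(x)/\rho(x)$ exists and is finite. *)

theory Defs
  imports "HOL-Analysis.Analysis"
begin

definition p_poly :: "nat \<Rightarrow> nat \<Rightarrow> real \<Rightarrow> real" where
  "p_poly k n a = (\<Sum>i=0..k. real (k choose i) * pochhammer (real n) i * a ^ (k - i))"

definition W_basis :: "nat \<Rightarrow> nat \<Rightarrow> real \<Rightarrow> real \<Rightarrow> real" where
  "W_basis n k a x = exp (- (a * x / (1 + x))) * (p_poly k n a / fact k)
      * (x ^ k / (1 + x) ^ (k + n))"

definition T_op :: "nat \<Rightarrow> real \<Rightarrow> real \<Rightarrow> real \<Rightarrow> (real \<Rightarrow> real) \<Rightarrow> real \<Rightarrow> real" where
  "T_op n a \<alpha> \<beta> f x = (real n + \<beta>) *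
     (\<Sum>k. W_basis n k a x *
        integral {(real k + \<alpha>) / (real n + \<beta>) .. (real k + \<alpha> + 1) / (real n + \<beta>)} f)"

definition rho :: "real \<Rightarrow> real" where
  "rho x = 1 + x\<^sup>2"

definition B_rho :: "(real \<Rightarrow> real) set" where
  "B_rho = {f. \<exists>M. \<forall>x\<ge>0. \<bar>f x\<bar> \<le> M * rho x}"

definition C_rho :: "(real \<Rightarrow> real) set" where
  "C_rho = {f. f \<in> B_rho \<and> continuous_on {0..} f}"

definition C_rho_k :: "(real \<Rightarrow> real) set" where
  "C_rho_k = {f. f \<in> C_rho \<and> (\<exists>L. ((\<lambda>x. f x / rho x) \<longlongrightarrow> L) at_top)}"

definition rho_norm :: "(real \<Rightarrow> real) \<Rightarrow> real" where
  "rho_norm g = (SUP x\<in>{0..}. \<bar>g x\<bar> / rho x)"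

end

theory Submission
  imports Defs
begin


definition Aseq :: "real \<Rightarrow> real \<Rightarrow> nat \<Rightarrow> real" where
  "Aseq c u i = pochhammer c i * u ^ i / fact i"

lemma fact_Suc_div: "real (Suc m) * (X / fact (Suc m)) = (X::real) / fact m"
proof -
  have "fact (Suc m) = real (Suc m) * fact m" by (simp add: fact_Suc)
  moreover have "real (Suc m) \<noteq> 0" by simp
  ultimately show ?thesis by simp
qed

definition Bseq :: "real \<Rightarrow> nat \<Rightarrow> real" where
  "Bseq y j = y ^ j / fact j"

lemma A_sums:
  assumes "0 \<le> u" "u < 1"
  shows "Aseq c u sums ((1 - u) powr (- c))"
proof -
  have "\<bar>-u\<bar> < 1" using assms by simp
  from gen_binomial_real[OF this, of "-c"]
  have "(\<lambda>n. (-c gchoose n) * (-u)^n) sums (1 + -u) powr (-c)" .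
  moreover have "(\<lambda>n. (-c gchoose n) * (-u)^n) = Aseq c u"
  proof
    fix n
    have g: "(-c gchoose n) = (-1)^n * pochhammer c n / fact n" by (simp add: gbinomial_pochhammer)
    have p: "(-u)^n = (-1)^n * u^n" by (rule power_minus)
    have o: "(-1::real)^n * (-1)^n = 1"
    proof -
      have "(-1::real)^n * (-1)^n = ((-1) * (-1))^n" by (rule power_mult_distrib[symmetric])
      then show ?thesis by simp
    qed
    have "(-c gchoose n) * (-u)^n = ((-1)^n * (-1)^n) * (pochhammer c n * u^n / fact n)"
      unfolding g p by (simp only: mult_ac times_divide_eq_left times_divide_eq_right)
    then show "(-c gchoose n) * (-u)^n = Aseq c u n" unfolding o Aseq_def by simp
  qed
  ultimately show ?thesis by simp
qed

lemma A1_sums: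
  assumes "0 \<le> u" "u < 1"
  shows "(\<lambda>i. real i * Aseq c u i) sums (c * u * (1 - u) powr (- (c + 1)))"
proof -
  have "(\<lambda>m. (c * u) * Aseq (c + 1) u m) sums ((c * u) * (1 - u) powr (- (c + 1)))"
    by (intro sums_mult A_sums assms)
  moreover have "(\<lambda>m. (c * u) * Aseq (c + 1) u m) = (\<lambda>m. real (Suc m) * Aseq c u (Suc m))"
  proof
    fix m
    show "(c * u) * Aseq (c + 1) u m = real (Suc m) * Aseq c u (Suc m)"
      unfolding Aseq_def fact_Suc_div pochhammer_rec by (simp add: field_simps)
  qed
  ultimately have "(\<lambda>m. real (Suc m) * Aseq c u (Suc m)) sums (c * u * (1 - u) powr (- (c + 1)))"
    by simp
  then show ?thesis by (subst (asm) sums_Suc_iff) simp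
qed

lemma A2_sums:
  assumes "0 \<le> u" "u < 1"
  shows "(\<lambda>i. (real i)^2 * Aseq c u i) sums
     (c * u * ((c + 1) * u * (1 - u) powr (- (c + 2)) + (1 - u) powr (- (c + 1))))"
proof -
  have "(\<lambda>m. (c * u) * (real m * Aseq (c + 1) u m + Aseq (c + 1) u m)) sums
          ((c * u) * ((c + 1) * u * (1 - u) powr (- (c + 1 + 1)) + (1 - u) powr (- (c + 1))))"
    by (intro sums_mult sums_add A_sums A1_sums assms)
  moreover have "(\<lambda>m. (c * u) * (real m * Aseq (c + 1) u m + Aseq (c + 1) u m))
     = (\<lambda>m. (real (Suc m))^2 * Aseq c u (Suc m))"
  proof
    fix m
    have "(real (Suc m))^2 * Aseq c u (Suc m) = real (Suc m) * (real (Suc m) * Aseq c u (Suc m))"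
      by (simp add: power2_eq_square)
    also have "\<dots> = (real m + 1) * (pochhammer c (Suc m) * u ^ Suc m / fact m)"
      unfolding Aseq_def fact_Suc_div by simp
    finally show "(c * u) * (real m * Aseq (c + 1) u m + Aseq (c + 1) u m) = (real (Suc m))^2 * Aseq c u (Suc m)"
      unfolding Aseq_def pochhammer_rec by (simp add: field_simps)
  qed
  moreover have "c + 1 + 1 = c + 2" by simp
  ultimately have "(\<lambda>m. (real (Suc m))^2 * Aseq c u (Suc m)) sums
     (c * u * ((c + 1) * u * (1 - u) powr (- (c + 2)) + (1 - u) powr (- (c + 1))))"
    by simp
  then show ?thesis by (subst (asm) sums_Suc_iff) simp
qed

lemma B_sums: "Bseq y sums exp y"
proof -
  have "Bseq y = (\<lambda>n. y ^ n /\<^sub>R fact n)" by (rule ext) (simp add: Bseq_def divide_inverse mult.commute)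
  then show ?thesis using exp_converges[of y] by simp
qed

lemma B1_sums: "(\<lambda>j. real j * Bseq y j) sums (y * exp y)"
proof -
  have "(\<lambda>m. y * Bseq y m) sums (y * exp y)" by (intro sums_mult B_sums)
  moreover have "(\<lambda>m. y * Bseq y m) = (\<lambda>m. real (Suc m) * Bseq y (Suc m))"
  proof
    fix m show "y * Bseq y m = real (Suc m) * Bseq y (Suc m)"
      unfolding Bseq_def fact_Suc_div by (simp add: field_simps)
  qed
  ultimately have "(\<lambda>m. real (Suc m) * Bseq y (Suc m)) sums (y * exp y)" by simp
  then show ?thesis by (subst (asm) sums_Suc_iff) simp
qed

lemma B2_sums: "(\<lambda>j. (real j)^2 * Bseq y j) sums ((y^2 + y) * exp y)"
proof -
  have "(\<lambda>m. y * (real m * Bseq y m + Bseq y m)) sums (y * (y * exp y + exp y))"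
    by (intro sums_mult sums_add B_sums B1_sums)
  moreover have "(\<lambda>m. y * (real m * Bseq y m + Bseq y m)) = (\<lambda>m. (real (Suc m))^2 * Bseq y (Suc m))"
  proof
    fix m
    have "(real (Suc m))^2 * Bseq y (Suc m) = real (Suc m) * (real (Suc m) * Bseq y (Suc m))"
      by (simp add: power2_eq_square)
    also have "\<dots> = (real m + 1) * (y ^ Suc m / fact m)"
      unfolding Bseq_def fact_Suc_div by simp
    finally show "y * (real m * Bseq y m + Bseq y m) = (real (Suc m))^2 * Bseq y (Suc m)"
      unfolding Bseq_def by (simp add: field_simps)
  qed
  moreover have "y * (y * exp y + exp y) = (y^2 + y) * exp y" by (simp add: algebra_simps power2_eq_square)
  ultimately have "(\<lambda>m. (real (Suc m))^2 * Bseq y (Suc m)) sums ((y^2 + y) * exp y)" by simp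
  then show ?thesis by (subst (asm) sums_Suc_iff) simp
qed




lemma W_conv:
  fixes x a :: real
  assumes "x \<ge> 0"
  defines "u \<equiv> x / (1 + x)"
  shows "W_basis n k a x = exp (- (a * u)) * (1 - u) ^ n * (\<Sum>i\<le>k. Aseq (real n) u i * Bseq (a * u) (k - i))"
proof -
  have x1: "1 + x > 0" using assms by simp
  have u1: "1 - u = 1 / (1 + x)" unfolding u_def using x1 by (simp add: field_simps)
  have xk: "x ^ k / (1 + x) ^ (k + n) = u ^ k * (1 - u) ^ n"
  proof -
    have "(1 - u) ^ n = 1 / (1 + x) ^ n" unfolding u1 by (simp add: power_divide)
    moreover have "u ^ k = x ^ k / (1 + x) ^ k" unfolding u_def by (simp add: power_divide)
    ultimately show ?thesis by (simp add: power_add)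
  qed
  have tm: "real (k choose i) * pochhammer (real n) i * a ^ (k - i) / fact k * u ^ k
      = Aseq (real n) u i * Bseq (a * u) (k - i)" if "i \<in> {0..k}" for i
  proof -
    from that have ik: "i \<le> k" by simp
    have "u ^ k = u ^ i * u ^ (k - i)" using ik by (simp add: power_add[symmetric])
    moreover have "real (k choose i) / fact k = 1 / (fact i * fact (k - i))"
      using binomial_fact[OF ik, where 'a=real] by (simp add: field_simps)
    ultimately show ?thesis using ik
      unfolding Aseq_def Bseq_def by (simp add: field_simps power_mult_distrib)
  qed
  have "p_poly k n a / fact k * u ^ k = (\<Sum>i\<in>{0..k}. real (k choose i) * pochhammer (real n) i * a ^ (k - i) / fact k * u ^ k)"
    unfolding p_poly_def by (simp add: sum_divide_distrib sum_distrib_right)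
  also have "\<dots> = (\<Sum>i\<le>k. Aseq (real n) u i * Bseq (a * u) (k - i))"
    using tm by (simp add: atLeast0AtMost)
  finally have p: "p_poly k n a / fact k * u ^ k = (\<Sum>i\<le>k. Aseq (real n) u i * Bseq (a * u) (k - i))" .
  have "W_basis n k a x = exp (- (a * u)) * (1 - u) ^ n * (p_poly k n a / fact k * u ^ k)"
    unfolding W_basis_def xk by (simp add: u_def mult_ac)
  then show ?thesis using p by (simp only:)
qed




lemma conv_sums:
  fixes A B :: "nat \<Rightarrow> real"
  assumes A0: "\<And>i. A i \<ge> 0" and B0: "\<And>j. B j \<ge> 0"
    and sA: "A sums a0" and sA1: "(\<lambda>i. real i * A i) sums a1" and sA2: "(\<lambda>i. (real i)^2 * A i) sums a2"
    and sB: "B sums b0" and sB1: "(\<lambda>i. real i * B i) sums b1" and sB2: "(\<lambda>i. (real i)^2 * B i) sums b2"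
  shows "(\<lambda>k. \<Sum>i\<le>k. A i * B (k - i)) sums (a0 * b0)"
    and "(\<lambda>k. real k * (\<Sum>i\<le>k. A i * B (k - i))) sums (a1 * b0 + a0 * b1)"
    and "(\<lambda>k. (real k)^2 * (\<Sum>i\<le>k. A i * B (k - i))) sums (a2 * b0 + 2 * (a1 * b1) + a0 * b2)"
proof -
  have cp: "(\<lambda>k. \<Sum>i\<le>k. F i * G (k - i)) sums (f * g)"
    if "\<And>i. F i \<ge> 0" "\<And>j. G j \<ge> 0" "F sums f" "G sums g" for F G :: "nat \<Rightarrow> real" and f g
  proof -
    have "summable (\<lambda>k. norm (F k))" using that by (simp add: sums_summable)
    moreover have "summable (\<lambda>k. norm (G k))" using that by (simp add: sums_summable)
    ultimately have "(\<lambda>k. \<Sum>i\<le>k. F i * G (k - i)) sums ((\<Sum>k. F k) * (\<Sum>k. G k))"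
      by (rule Cauchy_product_sums)
    then show ?thesis using that by (simp add: sums_iff)
  qed
  have A1: "\<And>i. real i * A i \<ge> 0" and A2: "\<And>i. (real i)^2 * A i \<ge> 0"
    and B1: "\<And>i. real i * B i \<ge> 0" and B2: "\<And>i. (real i)^2 * B i \<ge> 0"
    using A0 B0 by auto
  show "(\<lambda>k. \<Sum>i\<le>k. A i * B (k - i)) sums (a0 * b0)" by (rule cp[OF A0 B0 sA sB])
  have e1: "real k * (\<Sum>i\<le>k. A i * B (k - i)) =
     (\<Sum>i\<le>k. (real i * A i) * B (k - i)) + (\<Sum>i\<le>k. A i * (real (k - i) * B (k - i)))" for k
  proof -
    have "real k * (\<Sum>i\<le>k. A i * B (k - i)) = (\<Sum>i\<le>k. (real i * A i) * B (k - i) + A i * (real (k - i) * B (k - i)))"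
      unfolding sum_distrib_left
      by (rule sum.cong) (auto simp: of_nat_diff algebra_simps)
    then show ?thesis by (simp add: sum.distrib)
  qed
  show "(\<lambda>k. real k * (\<Sum>i\<le>k. A i * B (k - i))) sums (a1 * b0 + a0 * b1)"
    unfolding e1 by (intro sums_add cp A0 B0 A1 B1 sA sA1 sB sB1)
  have e2: "(real k)^2 * (\<Sum>i\<le>k. A i * B (k - i)) =
     (\<Sum>i\<le>k. ((real i)^2 * A i) * B (k - i)) + 2 * (\<Sum>i\<le>k. (real i * A i) * (real (k - i) * B (k - i)))
      + (\<Sum>i\<le>k. A i * ((real (k - i))^2 * B (k - i)))" for k
  proof -
    have "(real k)^2 * (\<Sum>i\<le>k. A i * B (k - i)) = (\<Sum>i\<le>k. ((real i)^2 * A i) * B (k - i) + 2 * ((real i * A i) * (real (k - i) * B (k - i)))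
      + A i * ((real (k - i))^2 * B (k - i)))"
      unfolding sum_distrib_left
      by (rule sum.cong) (auto simp: of_nat_diff algebra_simps power2_eq_square)
    then show ?thesis by (simp add: sum.distrib sum_distrib_left)
  qed
  show "(\<lambda>k. (real k)^2 * (\<Sum>i\<le>k. A i * B (k - i))) sums (a2 * b0 + 2 * (a1 * b1) + a0 * b2)"
    unfolding e2 by (intro sums_add sums_mult cp A0 B0 A1 B1 A2 B2 sA sA1 sA2 sB sB1 sB2)
qed

lemma W_sums:
  fixes x a :: real
  assumes "x \<ge> 0" "a \<ge> 0"
  defines "u \<equiv> x / (1 + x)"
  shows "(\<lambda>k. W_basis n k a x) sums 1"
    and "(\<lambda>k. real k * W_basis n k a x) sums (real n * x + a * u)"
    and "(\<lambda>k. (real k)^2 * W_basis n k a x) sums ((real n * x + a * u)^2 + real n * x^2 + (real n * x + a * u))"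
    and "\<And>k. W_basis n k a x \<ge> 0"
proof -
  have x1: "1 + x > 0" using assms by simp
  have u0: "0 \<le> u" "u < 1" using assms x1 unfolding u_def by (auto simp: field_simps)
  define v where "v = 1 - u"
  have v0: "v > 0" using u0 unfolding v_def by simp
  have vx: "v = 1 / (1 + x)" unfolding v_def u_def using x1 by (simp add: field_simps)
  have ux: "u / v = x" unfolding vx u_def using x1 by simp
  define c where "c = real n"
  define P where "P = v powr (- c)"
  have P1: "v powr (- (c + 1)) = P / v" unfolding P_def using v0
    by (simp add: powr_diff powr_minus divide_inverse)
  have P2: "v powr (- (c + 2)) = P / v^2" unfolding P_def using v0
    by (simp add: powr_diff powr_minus divide_inverse powr_numeral)
  have ZP: "v ^ n * P = 1" unfolding P_def c_def using v0 by (simp add: powr_minus powr_realpow)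
  define Z where "Z = exp (- (a * u)) * v ^ n"
  have ZPE: "Z * (P * exp (a * u)) = 1" unfolding Z_def using ZP
    by (simp add: exp_minus field_simps)
  have A0: "\<And>i. Aseq c u i \<ge> 0" unfolding Aseq_def c_def using u0
  proof -
    fix i
    have "0 \<le> pochhammer (real n) i" by (simp add: pochhammer_of_nat)
    moreover have "0 \<le> u ^ i" using u0 by simp
    ultimately show "0 \<le> pochhammer (real n) i * u ^ i / fact i" by simp
  qed
  have B0: "\<And>j. Bseq (a * u) j \<ge> 0" unfolding Bseq_def using u0 assms by simp
  have Weq: "W_basis n k a x = Z * (\<Sum>i\<le>k. Aseq c u i * Bseq (a * u) (k - i))" for k
    using W_conv[OF assms(1), of n k a] unfolding Z_def v_def c_def u_def by simp
  note cs = conv_sums[OF A0 B0 A_sums[OF u0] A1_sums[OF u0] A2_sums[OF u0] B_sums B1_sums B2_sums]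
  show "\<And>k. W_basis n k a x \<ge> 0" unfolding Weq Z_def
    using A0 B0 v0 by (intro mult_nonneg_nonneg sum_nonneg) auto
  have P0': "(1 - u) powr (- c) = P" unfolding P_def v_def ..
  have P1': "(1 - u) powr (- (c + 1)) = P / v" using P1 unfolding v_def .
  have P2': "(1 - u) powr (- (c + 2)) = P / v^2" using P2 unfolding v_def .
  let ?E = "exp (a * u)"
  have "(\<lambda>k. W_basis n k a x) sums (Z * ((1 - u) powr (- c) * ?E))"
    unfolding Weq by (rule sums_mult[OF cs(1)])
  then show "(\<lambda>k. W_basis n k a x) sums 1" using ZPE unfolding P0' by simp
  have "(\<lambda>k. real k * W_basis n k a x) sums (Z * (c * u * (1 - u) powr (- (c + 1)) * ?E + (1 - u) powr (- c) * (a * u * ?E)))"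
    unfolding Weq using sums_mult[OF cs(2), of Z] by (simp add: mult_ac)
  moreover have "Z * (c * u * (1 - u) powr (- (c + 1)) * ?E + (1 - u) powr (- c) * (a * u * ?E)) = (c * (u / v) + a * u) * (Z * (P * ?E))"
    unfolding P0' P1' using v0 by (simp add: field_simps)
  ultimately show "(\<lambda>k. real k * W_basis n k a x) sums (real n * x + a * u)"
    using ZPE ux by (simp add: c_def)
  have s2: "(\<lambda>k. (real k)^2 * W_basis n k a x) sums (Z * (c * u * ((c + 1) * u * (1 - u) powr (- (c + 2)) + (1 - u) powr (- (c + 1))) * ?E
       + 2 * (c * u * (1 - u) powr (- (c + 1)) * (a * u * ?E)) + (1 - u) powr (- c) * (((a * u)^2 + a * u) * ?E)))"
    unfolding Weq using sums_mult[OF cs(3), of Z] by (simp add: mult_ac)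
  have e2: "Z * (c * u * ((c + 1) * u * (1 - u) powr (- (c + 2)) + (1 - u) powr (- (c + 1))) * ?E
       + 2 * (c * u * (1 - u) powr (- (c + 1)) * (a * u * ?E)) + (1 - u) powr (- c) * (((a * u)^2 + a * u) * ?E))
      = (c * (c + 1) * (u / v)^2 + c * (u / v) + 2 * c * (u / v) * (a * u) + (a * u)^2 + a * u) * (Z * (P * ?E))"
    unfolding P0' P1' P2' using v0 by (simp add: field_simps power2_eq_square)
  have e3: "(c * (c + 1) * (u / v)^2 + c * (u / v) + 2 * c * (u / v) * (a * u) + (a * u)^2 + a * u) * (Z * (P * ?E))
     = (real n * x + a * u)^2 + real n * x^2 + (real n * x + a * u)"
    unfolding ZPE ux c_def by (simp add: algebra_simps power2_eq_square)
  show "(\<lambda>k. (real k)^2 * W_basis n k a x) sums ((real n * x + a * u)^2 + real n * x^2 + (real n * x + a * u))"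
    using s2 unfolding e2 e3 .
qed




lemma quad_integral:
  fixes l r c0 c1 c2 :: real
  assumes "l \<le> r"
  shows "integral {l..r} (\<lambda>t. c0 + c1 * t + c2 * t^2) = c0 * (r - l) + c1 * (r^2 - l^2) / 2 + c2 * (r^3 - l^3) / 3"
proof -
  let ?F = "\<lambda>t::real. c0 * t + c1 * t^2 / 2 + c2 * t^3 / 3"
  have "((\<lambda>t. c0 + c1 * t + c2 * t^2) has_integral (?F r - ?F l)) {l..r}"
  proof (rule fundamental_theorem_of_calculus[OF assms])
    fix t assume "t \<in> {l..r}"
    have "(?F has_real_derivative (c0 + c1 * t + c2 * t^2)) (at t within {l..r})"
      by (auto intro!: derivative_eq_intros simp: power2_eq_square)
    then show "(?F has_vector_derivative (c0 + c1 * t + c2 * t^2)) (at t within {l..r})"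
      by (simp add: has_real_derivative_iff_has_vector_derivative)
  qed
  then have "integral {l..r} (\<lambda>t. c0 + c1 * t + c2 * t^2) = ?F r - ?F l" by (rule integral_unique)
  also have "\<dots> = c0 * (r - l) + c1 * (r^2 - l^2) / 2 + c2 * (r^3 - l^3) / 3" by (simp add: field_simps)
  finally show ?thesis .
qed

definition S1f :: "nat \<Rightarrow> real \<Rightarrow> real \<Rightarrow> real" where
  "S1f n a x = real n * x + a * (x / (1 + x))"
definition S2f :: "nat \<Rightarrow> real \<Rightarrow> real \<Rightarrow> real" where
  "S2f n a x = (S1f n a x)^2 + real n * x^2 + S1f n a x"
definition mom1 :: "nat \<Rightarrow> real \<Rightarrow> real \<Rightarrow> real \<Rightarrow> real \<Rightarrow> real" where
  "mom1 n a \<alpha> \<beta> x = (2 * \<alpha> + 1) / (2 * (real n + \<beta>)) + S1f n a x / (real n + \<beta>)"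
definition mom2 :: "nat \<Rightarrow> real \<Rightarrow> real \<Rightarrow> real \<Rightarrow> real \<Rightarrow> real" where
  "mom2 n a \<alpha> \<beta> x = (3 * \<alpha>^2 + 3 * \<alpha> + 1) / (3 * (real n + \<beta>)^2)
     + (2 * \<alpha> + 1) * S1f n a x / (real n + \<beta>)^2 + S2f n a x / (real n + \<beta>)^2"

lemma quad_integral_k:
  fixes N \<alpha> c0 c1 c2 :: real
  assumes "N > 0"
  shows "integral {(real k + \<alpha>) / N .. (real k + \<alpha> + 1) / N} (\<lambda>t. c0 + c1 * t + c2 * t^2)
    = (1 / N) * ((c0 + c1 * (2 * \<alpha> + 1) / (2 * N) + c2 * (3 * \<alpha>^2 + 3 * \<alpha> + 1) / (3 * N^2))
        + (c1 / N + c2 * (2 * \<alpha> + 1) / N^2) * real k + (c2 / N^2) * (real k)^2)"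
proof -
  have le: "(real k + \<alpha>) / N \<le> (real k + \<alpha> + 1) / N" using assms by (simp add: divide_right_mono)
  show ?thesis unfolding quad_integral[OF le] using assms
    by (simp add: field_simps power2_eq_square power3_eq_cube)
qed

lemma T_quad:
  fixes a \<alpha> \<beta> x c0 c1 c2 :: real
  assumes "real n + \<beta> > 0" "a \<ge> 0" "x \<ge> 0"
  shows "(\<lambda>k. W_basis n k a x * integral {(real k + \<alpha>) / (real n + \<beta>) .. (real k + \<alpha> + 1) / (real n + \<beta>)} (\<lambda>t. c0 + c1 * t + c2 * t^2))
          sums ((c0 + c1 * mom1 n a \<alpha> \<beta> x + c2 * mom2 n a \<alpha> \<beta> x) / (real n + \<beta>))"
    and "T_op n a \<alpha> \<beta> (\<lambda>t. c0 + c1 * t + c2 * t^2) x = c0 + c1 * mom1 n a \<alpha> \<beta> x + c2 * mom2 n a \<alpha> \<beta> x"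
proof -
  define N where "N = real n + \<beta>"
  have N0: "N > 0" using assms N_def by simp
  define d0 where "d0 = c0 + c1 * (2 * \<alpha> + 1) / (2 * N) + c2 * (3 * \<alpha>^2 + 3 * \<alpha> + 1) / (3 * N^2)"
  define d1 where "d1 = c1 / N + c2 * (2 * \<alpha> + 1) / N^2"
  define d2 where "d2 = c2 / N^2"
  note ws = W_sums[OF assms(3,2), of n, folded S1f_def, folded S2f_def]
  have A: "(\<lambda>k. (1 / N) * (d0 * W_basis n k a x + d1 * (real k * W_basis n k a x) + d2 * ((real k)^2 * W_basis n k a x)))
     sums ((1 / N) * (d0 * 1 + d1 * S1f n a x + d2 * S2f n a x))"
    by (intro sums_mult sums_add ws(1) ws(2) ws(3))
  have B: "(\<lambda>k. (1 / N) * (d0 * W_basis n k a x + d1 * (real k * W_basis n k a x) + d2 * ((real k)^2 * W_basis n k a x)))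
    = (\<lambda>k. W_basis n k a x * integral {(real k + \<alpha>) / N .. (real k + \<alpha> + 1) / N} (\<lambda>t. c0 + c1 * t + c2 * t^2))"
    unfolding quad_integral_k[OF N0] d0_def d1_def d2_def by (simp add: algebra_simps)
  have C: "(1 / N) * (d0 * 1 + d1 * S1f n a x + d2 * S2f n a x) = (c0 + c1 * mom1 n a \<alpha> \<beta> x + c2 * mom2 n a \<alpha> \<beta> x) / N"
    unfolding mom1_def mom2_def d0_def d1_def d2_def N_def[symmetric] using N0
    by (simp add: field_simps power2_eq_square)
  have s0: "(\<lambda>k. W_basis n k a x * integral {(real k + \<alpha>) / N .. (real k + \<alpha> + 1) / N} (\<lambda>t. c0 + c1 * t + c2 * t^2))
     sums ((c0 + c1 * mom1 n a \<alpha> \<beta> x + c2 * mom2 n a \<alpha> \<beta> x) / N)"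
    using A unfolding B C .
  then show s: "(\<lambda>k. W_basis n k a x * integral {(real k + \<alpha>) / (real n + \<beta>) .. (real k + \<alpha> + 1) / (real n + \<beta>)} (\<lambda>t. c0 + c1 * t + c2 * t^2))
          sums ((c0 + c1 * mom1 n a \<alpha> \<beta> x + c2 * mom2 n a \<alpha> \<beta> x) / (real n + \<beta>))"
    unfolding N_def .
  show "T_op n a \<alpha> \<beta> (\<lambda>t. c0 + c1 * t + c2 * t^2) x = c0 + c1 * mom1 n a \<alpha> \<beta> x + c2 * mom2 n a \<alpha> \<beta> x"
    unfolding T_op_def using sums_unique[OF s, symmetric] N0 N_def by simp
qed




lemma T_cmp:
  fixes a \<alpha> \<beta> x c0 c1 c2 :: real and \<phi> :: "real \<Rightarrow> real"
  assumes N0: "real n + \<beta> > 0" and al: "\<alpha> \<ge> 0" and a0: "a \<ge> 0" and x0: "x \<ge> 0"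
    and cont: "continuous_on {0..} \<phi>"
    and bnd: "\<And>t. t \<ge> 0 \<Longrightarrow> \<bar>\<phi> t\<bar> \<le> c0 + c1 * t + c2 * t^2"
  shows "summable (\<lambda>k. W_basis n k a x * integral {(real k + \<alpha>) / (real n + \<beta>) .. (real k + \<alpha> + 1) / (real n + \<beta>)} \<phi>)"
    and "\<bar>T_op n a \<alpha> \<beta> \<phi> x\<bar> \<le> c0 + c1 * mom1 n a \<alpha> \<beta> x + c2 * mom2 n a \<alpha> \<beta> x"
proof -
  define N where "N = real n + \<beta>"
  have N0': "N > 0" using N0 N_def by simp
  define I where "I k = {(real k + \<alpha>) / N .. (real k + \<alpha> + 1) / N}" for k :: nat
  define q where "q = (\<lambda>t::real. c0 + c1 * t + c2 * t^2)"
  define f where "f k = W_basis n k a x * integral (I k) \<phi>" for k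
  define g where "g k = W_basis n k a x * integral (I k) q" for k
  have sub: "I k \<subseteq> {0..}" for k
  proof
    fix t assume "t \<in> I k"
    then have "(real k + \<alpha>) / N \<le> t" unfolding I_def by simp
    moreover have "0 \<le> (real k + \<alpha>) / N" using al N0' by simp
    ultimately show "t \<in> {0..}" by simp
  qed
  have intf: "\<phi> integrable_on I k" for k
    unfolding I_def by (rule integrable_continuous_interval, rule continuous_on_subset[OF cont sub[unfolded I_def]])
  have intq: "q integrable_on I k" for k
    unfolding I_def q_def by (rule integrable_continuous_interval) (intro continuous_intros)
  have ib: "\<bar>integral (I k) \<phi>\<bar> \<le> integral (I k) q" for k
  proof -
    have "norm (integral (I k) \<phi>) \<le> integral (I k) q"
      by (rule Henstock_Kurzweil_Integration.integral_norm_bound_integral[OF intf intq])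
        (use sub bnd in \<open>auto simp: q_def\<close>)
    then show ?thesis by simp
  qed
  have W0: "W_basis n k a x \<ge> 0" for k using W_sums(4)[OF x0 a0] by simp
  have fg: "\<bar>f k\<bar> \<le> g k" for k
    unfolding f_def g_def using ib[of k] W0[of k] by (simp add: abs_mult mult_left_mono)
  have gs: "g sums ((c0 + c1 * mom1 n a \<alpha> \<beta> x + c2 * mom2 n a \<alpha> \<beta> x) / N)"
    unfolding g_def I_def q_def N_def by (rule T_quad(1)[OF N0 a0 x0])
  have sg: "summable g" using gs by (rule sums_summable)
  have sf: "summable f" by (rule summable_comparison_test[OF _ sg]) (use fg in auto)
  then show "summable (\<lambda>k. W_basis n k a x * integral {(real k + \<alpha>) / (real n + \<beta>) .. (real k + \<alpha> + 1) / (real n + \<beta>)} \<phi>)"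
    unfolding f_def I_def N_def .
  have "suminf f \<le> suminf g" by (rule suminf_le) (use fg sf sg in \<open>auto simp: abs_le_iff\<close>)
  moreover have "suminf (\<lambda>k. - g k) \<le> suminf f"
  proof (rule suminf_le)
    show "\<And>k. - g k \<le> f k" using fg by (simp add: abs_le_iff) (metis minus_le_iff)
  qed (use sf sg summable_minus in auto)
  ultimately have "\<bar>suminf f\<bar> \<le> suminf g" using suminf_minus[OF sg] by linarith
  also have "suminf g = (c0 + c1 * mom1 n a \<alpha> \<beta> x + c2 * mom2 n a \<alpha> \<beta> x) / N" using gs by (rule sums_unique[symmetric])
  finally have "N * \<bar>suminf f\<bar> \<le> c0 + c1 * mom1 n a \<alpha> \<beta> x + c2 * mom2 n a \<alpha> \<beta> x"
    using N0' by (simp add: field_simps)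
  moreover have "T_op n a \<alpha> \<beta> \<phi> x = N * suminf f" unfolding T_op_def f_def I_def N_def ..
  ultimately show "\<bar>T_op n a \<alpha> \<beta> \<phi> x\<bar> \<le> c0 + c1 * mom1 n a \<alpha> \<beta> x + c2 * mom2 n a \<alpha> \<beta> x"
    using N0' by (simp add: abs_mult)
qed

lemma T_add:
  fixes a \<alpha> \<beta> x :: real and \<phi> \<psi> :: "real \<Rightarrow> real"
  assumes N0: "real n + \<beta> > 0" and al: "\<alpha> \<ge> 0"
    and c1: "continuous_on {0..} \<phi>" and c2: "continuous_on {0..} \<psi>"
    and s1: "summable (\<lambda>k. W_basis n k a x * integral {(real k + \<alpha>) / (real n + \<beta>) .. (real k + \<alpha> + 1) / (real n + \<beta>)} \<phi>)"
    and s2: "summable (\<lambda>k. W_basis n k a x * integral {(real k + \<alpha>) / (real n + \<beta>) .. (real k + \<alpha> + 1) / (real n + \<beta>)} \<psi>)"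
  shows "T_op n a \<alpha> \<beta> (\<lambda>t. \<phi> t + \<psi> t) x = T_op n a \<alpha> \<beta> \<phi> x + T_op n a \<alpha> \<beta> \<psi> x"
proof -
  define N where "N = real n + \<beta>"
  have N0': "N > 0" using N0 N_def by simp
  define I where "I k = {(real k + \<alpha>) / N .. (real k + \<alpha> + 1) / N}" for k :: nat
  have sub: "I k \<subseteq> {0..}" for k
  proof
    fix t assume "t \<in> I k"
    then have "(real k + \<alpha>) / N \<le> t" unfolding I_def by simp
    moreover have "0 \<le> (real k + \<alpha>) / N" using al N0' by simp
    ultimately show "t \<in> {0..}" by simp
  qed
  have i1: "\<phi> integrable_on I k" for k
    unfolding I_def by (rule integrable_continuous_interval, rule continuous_on_subset[OF c1 sub[unfolded I_def]])
  have i2: "\<psi> integrable_on I k" for k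
    unfolding I_def by (rule integrable_continuous_interval, rule continuous_on_subset[OF c2 sub[unfolded I_def]])
  have "(\<lambda>k. W_basis n k a x * integral (I k) (\<lambda>t. \<phi> t + \<psi> t)) =
        (\<lambda>k. W_basis n k a x * integral (I k) \<phi> + W_basis n k a x * integral (I k) \<psi>)"
    using i1 i2 by (simp add: integral_add distrib_left)
  moreover have "(\<Sum>k. W_basis n k a x * integral (I k) \<phi> + W_basis n k a x * integral (I k) \<psi>)
     = (\<Sum>k. W_basis n k a x * integral (I k) \<phi>) + (\<Sum>k. W_basis n k a x * integral (I k) \<psi>)"
    using suminf_add[OF s1 s2] unfolding I_def N_def by simp
  ultimately show ?thesis unfolding T_op_def I_def N_def by (simp add: distrib_left)
qed




lemma mom_bounds:
  fixes a \<alpha> \<beta> x :: real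
  assumes n1: "n \<ge> 1" and a0: "a \<ge> 0" and al: "0 \<le> \<alpha>" and ab: "\<alpha> \<le> \<beta>" and x0: "x \<ge> 0"
  shows "\<bar>x * (mom1 n a \<alpha> \<beta> x - x)\<bar> \<le> (\<alpha> + 1 + a + \<beta>) * (1 + x^2) / real n"
    and "\<bar>mom2 n a \<alpha> \<beta> x - x^2\<bar> \<le> ((3 * \<alpha>^2 + 3 * \<alpha> + 1) / 3 + (2 * \<alpha> + 1) * (1 + a) + 2 * \<beta> + \<beta>^2 + 3 * a + a^2 + 2) * (1 + x^2) / real n"
proof -
  define m where "m = real n"
  have m1: "m \<ge> 1" using n1 unfolding m_def by simp
  have b0: "\<beta> \<ge> 0" using al ab by simp
  define N where "N = m + \<beta>"
  have N0: "N > 0" and Nm: "N \<ge> m" using m1 b0 unfolding N_def by auto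
  define u where "u = x / (1 + x)"
  have u0: "0 \<le> u" "u \<le> 1" using x0 unfolding u_def by (auto simp: field_simps)
  define Y where "Y = 1 + x^2"
  have xY: "x \<le> Y"
  proof -
    have eq: "(x - 1)^2 = x^2 - 2 * x + 1" by (simp add: power2_eq_square algebra_simps)
    have "0 \<le> (x - 1)^2" by simp
    then show ?thesis unfolding Y_def using eq x0 by linarith
  qed
  have x2Y: "x^2 \<le> Y" "1 \<le> Y" unfolding Y_def by auto
  have mY: "1 \<le> m * Y" using m1 x2Y by (metis mult_mono' mult_1 zero_le_one)
  have xu: "x * u \<le> Y" using xY u0 x0 by (metis mult_left_le order_trans)
  have S1: "S1f n a x = m * x + a * u" unfolding S1f_def m_def u_def ..
  define E1 where "E1 = (2 * \<alpha> + 1) / 2 + a * u - \<beta> * x"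
  have mA: "mom1 n a \<alpha> \<beta> x = ((2 * \<alpha> + 1) / 2 + (m * x + a * u)) / N"
    unfolding mom1_def S1 m_def[symmetric] N_def[symmetric] by (simp add: add_divide_distrib)
  have xN: "x = N * x / N" using N0 by simp
  have e1: "mom1 n a \<alpha> \<beta> x - x = E1 / N"
  proof -
    have "mom1 n a \<alpha> \<beta> x - x = ((2 * \<alpha> + 1) / 2 + (m * x + a * u) - N * x) / N"
      unfolding mA by (subst (2) xN) (simp only: diff_divide_distrib)
    also have "(2 * \<alpha> + 1) / 2 + (m * x + a * u) - N * x = E1" unfolding E1_def N_def by (simp add: algebra_simps)
    finally show ?thesis .
  qed
  have "\<bar>x * E1\<bar> \<le> x * ((2 * \<alpha> + 1) / 2) + a * (x * u) + \<beta> * x^2"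
  proof -
    have "\<bar>E1\<bar> \<le> (2 * \<alpha> + 1) / 2 + a * u + \<beta> * x" unfolding E1_def using al a0 b0 u0 x0 by (simp add: abs_le_iff)
    then have "x * \<bar>E1\<bar> \<le> x * ((2 * \<alpha> + 1) / 2 + a * u + \<beta> * x)" using x0 by (intro mult_left_mono)
    then show ?thesis using x0 by (simp add: abs_mult algebra_simps power2_eq_square)
  qed
  also have "\<dots> \<le> ((2 * \<alpha> + 1) / 2) * Y + a * Y + \<beta> * Y"
  proof -
    have "x * ((2 * \<alpha> + 1) / 2) \<le> ((2 * \<alpha> + 1) / 2) * Y" using xY al by (simp add: mult.commute mult_left_mono)
    moreover have "a * (x * u) \<le> a * Y" using xu a0 by (rule mult_left_mono)
    moreover have "\<beta> * x^2 \<le> \<beta> * Y" using x2Y b0 by (simp add: mult_left_mono)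
    ultimately show ?thesis by linarith
  qed
  also have "\<dots> \<le> (\<alpha> + 1 + a + \<beta>) * Y" using x2Y by (simp add: algebra_simps)
  finally have b1: "\<bar>x * E1\<bar> \<le> (\<alpha> + 1 + a + \<beta>) * Y" .
  have "\<bar>x * (mom1 n a \<alpha> \<beta> x - x)\<bar> = \<bar>x * E1\<bar> / N" unfolding e1 using N0 by (simp add: abs_mult)
  also have "\<dots> \<le> (\<alpha> + 1 + a + \<beta>) * Y / N" using b1 N0 by (simp add: divide_right_mono)
  also have "\<dots> \<le> (\<alpha> + 1 + a + \<beta>) * Y / m"
    using Nm m1 al a0 b0 x2Y by (intro divide_left_mono) auto
  finally show "\<bar>x * (mom1 n a \<alpha> \<beta> x - x)\<bar> \<le> (\<alpha> + 1 + a + \<beta>) * (1 + x^2) / real n"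
    unfolding Y_def m_def .
  define c0 where "c0 = (3 * \<alpha>^2 + 3 * \<alpha> + 1) / 3"
  have c00: "c0 \<ge> 0" unfolding c0_def using al by simp
  define D where "D = c0 + (2 * \<alpha> + 1) * (m * x + a * u) + (m^2 - N^2) * x^2 + 2 * m * (a * (x * u)) + (a * u)^2 + m * x^2 + m * x + a * u"
  have N2: "N^2 > 0" using N0 by simp
  have mB: "mom2 n a \<alpha> \<beta> x = (c0 + (2 * \<alpha> + 1) * S1f n a x + S2f n a x) / N^2"
    unfolding mom2_def c0_def m_def[symmetric] N_def[symmetric] by (simp add: add_divide_distrib)
  have xN2: "x^2 = N^2 * x^2 / N^2" using N2 by simp
  have e2: "mom2 n a \<alpha> \<beta> x - x^2 = D / N^2"
  proof -
    have "mom2 n a \<alpha> \<beta> x - x^2 = (c0 + (2 * \<alpha> + 1) * S1f n a x + S2f n a x - N^2 * x^2) / N^2"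
      unfolding mB using N2 by (simp add: diff_divide_distrib)
    also have "c0 + (2 * \<alpha> + 1) * S1f n a x + S2f n a x - N^2 * x^2 = D"
      unfolding D_def S2f_def S1 m_def by (simp add: algebra_simps power2_eq_square)
    finally show ?thesis .
  qed
  define K2 where "K2 = c0 + (2 * \<alpha> + 1) * (1 + a) + 2 * \<beta> + \<beta>^2 + 3 * a + a^2 + 2"
  have t0: "c0 \<le> c0 * (m * Y)" using c00 mY by (metis mult_left_mono mult_1_right)
  have t1: "(2 * \<alpha> + 1) * (m * x + a * u) \<le> (2 * \<alpha> + 1) * ((1 + a) * (m * Y))"
  proof -
    have "m * x \<le> m * Y" using xY m1 by simp
    moreover have "a * u \<le> a * (m * Y)" using u0 mY a0 by (metis mult_left_mono order_trans)
    ultimately show ?thesis using al by (intro mult_left_mono) (auto simp: algebra_simps)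
  qed
  have t2: "\<bar>(m^2 - N^2) * x^2\<bar> \<le> (2 * \<beta> + \<beta>^2) * (m * Y)"
  proof -
    have eqN: "m^2 - N^2 = - (2 * m * \<beta> + \<beta>^2)" unfolding N_def by (simp add: power2_eq_square algebra_simps)
    have nn: "0 \<le> 2 * m * \<beta> + \<beta>^2" using m1 b0 by simp
    have "\<bar>m^2 - N^2\<bar> = 2 * m * \<beta> + \<beta>^2" unfolding eqN using nn by simp
    also have "\<dots> \<le> (2 * \<beta> + \<beta>^2) * m"
    proof -
      have "\<beta>^2 * 1 \<le> \<beta>^2 * m" using m1 by (intro mult_left_mono) auto
      then show ?thesis by (simp add: algebra_simps)
    qed
    finally have "\<bar>m^2 - N^2\<bar> * x^2 \<le> (2 * \<beta> + \<beta>^2) * m * Y"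
      using x2Y by (meson mult_mono abs_ge_zero zero_le_power2 m1 b0 order_trans)
    then show ?thesis by (simp add: abs_mult mult_ac)
  qed
  have t3: "2 * m * (a * (x * u)) \<le> 2 * a * (m * Y)"
  proof -
    have "a * (x * u) \<le> a * Y" using xu a0 by (rule mult_left_mono)
    then have "(2 * m) * (a * (x * u)) \<le> (2 * m) * (a * Y)" by (rule mult_left_mono) (use m1 in auto)
    then show ?thesis by (simp add: mult_ac)
  qed
  have t4: "(a * u)^2 \<le> a^2 * (m * Y)"
  proof -
    have "(a * u)^2 \<le> a^2" using u0 a0 by (simp add: power_mult_distrib power_le_one mult_left_le)
    then show ?thesis using mY by (metis mult_left_mono mult_1_right zero_le_power2 order_trans)
  qed
  have t5: "m * x^2 \<le> m * Y" "m * x \<le> m * Y" using m1 x2Y xY by auto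
  have t6: "a * u \<le> a * (m * Y)" using u0 mY a0 by (metis mult_left_mono mult_left_le order_trans)
  have t7: "0 \<le> (2 * \<alpha> + 1) * (m * x + a * u)" "0 \<le> 2 * m * (a * (x * u))" "0 \<le> a * u" "0 \<le> m * x"
    using al a0 u0 x0 m1 by auto
  define T1 where "T1 = (2 * \<alpha> + 1) * (m * x + a * u)"
  define T2 where "T2 = (m^2 - N^2) * x^2"
  define T3 where "T3 = 2 * m * (a * (x * u))"
  define T4 where "T4 = (a * u)^2"
  define T5 where "T5 = m * x^2"
  define T6 where "T6 = m * x"
  define T7 where "T7 = a * u"
  define P0 where "P0 = c0 * (m * Y)"
  define P1 where "P1 = (2 * \<alpha> + 1) * ((1 + a) * (m * Y))"
  define P2 where "P2 = (2 * \<beta> + \<beta>^2) * (m * Y)"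
  define P3 where "P3 = 2 * a * (m * Y)"
  define P4 where "P4 = a^2 * (m * Y)"
  define P5 where "P5 = m * Y"
  define P7 where "P7 = a * (m * Y)"
  have Dsum: "D = c0 + T1 + T2 + T3 + T4 + T5 + T6 + T7"
    unfolding D_def T1_def T2_def T3_def T4_def T5_def T6_def T7_def by simp
  have q0: "c0 \<le> P0" "0 \<le> c0" using t0 c00 unfolding P0_def by auto
  have q1: "T1 \<le> P1" "0 \<le> T1" using t1 t7(1) unfolding T1_def P1_def by auto
  have q2: "\<bar>T2\<bar> \<le> P2" using t2 unfolding T2_def P2_def by auto
  have q3: "T3 \<le> P3" "0 \<le> T3" using t3 t7(2) unfolding T3_def P3_def by auto
  have q4: "T4 \<le> P4" "0 \<le> T4" using t4 unfolding T4_def P4_def by auto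
  have q5: "T5 \<le> P5" "0 \<le> T5" "T6 \<le> P5" "0 \<le> T6" using t5 t7(4) m1 unfolding T5_def T6_def P5_def by auto
  have q7: "T7 \<le> P7" "0 \<le> T7" using t6 t7(3) unfolding T7_def P7_def by auto
  have "\<bar>D\<bar> \<le> P0 + P1 + P2 + P3 + P4 + P5 + P5 + P7"
    unfolding Dsum using q0 q1 q2 q3 q4 q5 q7 by linarith
  also have "\<dots> = K2 * (m * Y)" unfolding K2_def P0_def P1_def P2_def P3_def P4_def P5_def P7_def
    by (simp add: algebra_simps)
  finally have bD: "\<bar>D\<bar> \<le> K2 * (m * Y)" .
  have K20: "K2 \<ge> 0" unfolding K2_def using c00 al a0 b0 by simp
  have "\<bar>mom2 n a \<alpha> \<beta> x - x^2\<bar> = \<bar>D\<bar> / N^2" unfolding e2 by (simp add: abs_divide)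
  also have "\<dots> \<le> K2 * (m * Y) / N^2" using bD N0 by (simp add: divide_right_mono)
  also have "\<dots> \<le> K2 * (m * Y) / m^2"
    using Nm m1 K20 x2Y by (intro divide_left_mono mult_nonneg_nonneg power_mono) auto
  also have "\<dots> = K2 * Y / m" using m1 by (simp add: power2_eq_square)
  finally show "\<bar>mom2 n a \<alpha> \<beta> x - x^2\<bar> \<le> ((3 * \<alpha>^2 + 3 * \<alpha> + 1) / 3 + (2 * \<alpha> + 1) * (1 + a) + 2 * \<beta> + \<beta>^2 + 3 * a + a^2 + 2) * (1 + x^2) / real n"
    unfolding K2_def c0_def Y_def m_def .
qed




lemma rho_pos: "rho x > 0" "rho x \<ge> 1" unfolding rho_def by (simp_all add: add_pos_nonneg)

lemma rho_shift: "rho t \<le> 2 * rho x + 2 * (t - x)^2"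
proof -
  have eq: "2 * x^2 + 2 * (t - x)^2 - t^2 = (t - 2 * x)^2" by (simp add: power2_eq_square algebra_simps)
  have "0 \<le> (t - 2 * x)^2" by simp
  then have "t^2 \<le> 2 * x^2 + 2 * (t - x)^2" using eq by linarith
  then show ?thesis unfolding rho_def by simp
qed

lemma h_est:
  fixes h :: "real \<Rightarrow> real" and \<epsilon> :: real
  assumes cont: "continuous_on {0..} h" and lim: "((\<lambda>t. h t / rho t) \<longlongrightarrow> 0) at_top" and e0: "\<epsilon> > 0"
  shows "\<exists>C\<ge>0. \<forall>x\<ge>0. \<forall>t\<ge>0. \<bar>h t - h x\<bar> \<le> 3 * \<epsilon> * rho x + C * (t - x)^2"
proof -
  have "\<forall>\<^sub>F t in at_top. dist (h t / rho t) 0 < \<epsilon>" using lim e0 by (rule tendstoD)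
  then obtain R0 where R0: "\<And>t. t \<ge> R0 \<Longrightarrow> \<bar>h t / rho t\<bar> < \<epsilon>" by (auto simp: eventually_at_top_linorder)
  define R where "R = max R0 0"
  have R: "\<bar>h t\<bar> \<le> \<epsilon> * rho t" if "t \<ge> R" for t
  proof -
    have "\<bar>h t\<bar> / rho t < \<epsilon>" using R0[of t] that rho_pos[of t] unfolding R_def by (simp add: abs_divide)
    then show ?thesis using rho_pos[of t] by (simp add: field_simps)
  qed
  have R00: "R \<ge> 0" unfolding R_def by simp
  define K where "K = {0..R + 2}"
  have cK: "continuous_on K h" using cont unfolding K_def by (rule continuous_on_subset) auto
  have cpK: "compact K" unfolding K_def by (rule compact_Icc)
  obtain B where B0: "B \<ge> 0" and Bn: "\<And>y. y \<in> K \<Longrightarrow> norm (h y) \<le> B"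
    using continuous_on_compact_bound[OF cpK cK] by blast
  have B: "\<bar>h y\<bar> \<le> B" if "y \<in> K" for y using Bn[OF that] by simp
  have "uniformly_continuous_on K h" using cK cpK by (rule compact_uniformly_continuous)
  then have "\<exists>d>0. \<forall>y\<in>K. \<forall>y'\<in>K. dist y' y < d \<longrightarrow> dist (h y') (h y) < \<epsilon>"
    unfolding uniformly_continuous_on_def using e0 by blast
  then obtain d where d0: "d > 0" and d: "\<And>y y'. y \<in> K \<Longrightarrow> y' \<in> K \<Longrightarrow> dist y' y < d \<Longrightarrow> dist (h y') (h y) < \<epsilon>"
    by blast
  define \<delta> where "\<delta> = min d 1"
  have \<delta>0: "\<delta> > 0" "\<delta> \<le> 1" "\<delta> \<le> d" unfolding \<delta>_def using d0 by auto
  have Bd: "B \<le> B / \<delta>^2"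
  proof -
    have "\<delta>^2 \<le> 1" using \<delta>0 by (simp add: power_le_one)
    then show ?thesis using B0 \<delta>0 by (simp add: field_simps mult_left_le)
  qed
  define C where "C = 2 * \<epsilon> + 3 * (B / \<delta>^2)"
  have C0: "C \<ge> 0" unfolding C_def using e0 B0 \<delta>0 by simp
  have main: "\<bar>h t - h x\<bar> \<le> 3 * \<epsilon> * rho x + C * (t - x)^2" if x0: "x \<ge> 0" and t0: "t \<ge> 0" for x t
  proof -
    define s where "s = (t - x)^2"
    have s0: "s \<ge> 0" unfolding s_def by simp
    have erx: "\<epsilon> * rho x \<ge> \<epsilon>" using e0 rho_pos[of x] by simp
    have Bs: "B * s \<le> (B / \<delta>^2) * s" using Bd s0 by (rule mult_right_mono)
    have es: "0 \<le> \<epsilon> * s" "0 \<le> \<epsilon> * rho x" using e0 s0 rho_pos[of x] by auto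
    have B2s: "0 \<le> (B / \<delta>^2) * s" using B0 s0 by simp
    have rt0: "\<epsilon> * rho t \<le> \<epsilon> * (2 * rho x + 2 * (t - x)^2)"
      using rho_shift[of t x] e0 by (intro mult_left_mono) auto
    then have rt: "\<epsilon> * rho t \<le> 2 * (\<epsilon> * rho x) + 2 * (\<epsilon> * s)"
      unfolding s_def by (simp add: algebra_simps)
    have goal: "3 * \<epsilon> * rho x + C * (t - x)^2 = 3 * (\<epsilon> * rho x) + 2 * (\<epsilon> * s) + 3 * ((B / \<delta>^2) * s)"
      unfolding C_def s_def by (simp add: algebra_simps)
    have "\<bar>h t - h x\<bar> \<le> 3 * (\<epsilon> * rho x) + 2 * (\<epsilon> * s) + 3 * ((B / \<delta>^2) * s)"
    proof (cases "x \<le> R + 2 \<and> t \<le> R + 2")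
      case True
      then have xK: "x \<in> K" and tK: "t \<in> K" using x0 t0 unfolding K_def by auto
      show ?thesis
      proof (cases "\<bar>t - x\<bar> < \<delta>")
        case True
        then have "dist t x < d" using \<delta>0 by (simp add: dist_real_def)
        then have "\<bar>h t - h x\<bar> < \<epsilon>" using d[OF xK tK] by (simp add: dist_real_def)
        then show ?thesis using erx es B2s by linarith
      next
        case False
        then have "\<delta> \<le> \<bar>t - x\<bar>" by simp
        then have "\<delta> * \<delta> \<le> \<bar>t - x\<bar> * \<bar>t - x\<bar>" using \<delta>0 by (intro mult_mono) auto
        then have "\<delta>^2 \<le> s" unfolding s_def by (simp add: power2_eq_square)
        then have "1 \<le> s / \<delta>^2" using \<delta>0 by simp
        then have "2 * B \<le> 2 * B * (s / \<delta>^2)" using B0 mult_left_mono[of 1 "s / \<delta>^2" "2 * B"] by simp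
        also have "\<dots> = 2 * ((B / \<delta>^2) * s)" by simp
        finally have "2 * B \<le> 2 * ((B / \<delta>^2) * s)" .
        moreover have "\<bar>h t - h x\<bar> \<le> 2 * B" using B[OF xK] B[OF tK] by linarith
        ultimately show ?thesis using es B2s by linarith
      qed
    next
      case False
      show ?thesis
      proof (cases "x \<ge> R \<and> t \<ge> R")
        case True
        have "\<bar>h t - h x\<bar> \<le> \<epsilon> * rho t + \<epsilon> * rho x" using R[of t] R[of x] True by linarith
        then show ?thesis using rt es B2s by linarith
      next
        case F2: False
        then have far: "\<bar>t - x\<bar> \<ge> 2" using False by auto
        then have "1 * 1 \<le> \<bar>t - x\<bar> * \<bar>t - x\<bar>" by (intro mult_mono) auto
        then have "1 \<le> s" unfolding s_def by (simp add: power2_eq_square)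
        then have "B * 1 \<le> B * s" using B0 by (rule mult_left_mono)
        then have bs: "B \<le> (B / \<delta>^2) * s" using Bs by simp
        show ?thesis
        proof (cases "x < R")
          case True
          then have xK: "x \<in> K" unfolding K_def using x0 by auto
          have tR: "t \<ge> R" using True False F2 by auto
          have "\<bar>h t - h x\<bar> \<le> \<epsilon> * rho t + B" using R[OF tR] B[OF xK] by linarith
          then show ?thesis using rt es B2s bs by linarith
        next
          case xR: False
          then have "t < R" using F2 by auto
          then have tK: "t \<in> K" unfolding K_def using t0 by auto
          have "\<bar>h t - h x\<bar> \<le> B + \<epsilon> * rho x" using R[of x] xR B[OF tK] by linarith
          then show ?thesis using es B2s bs by linarith
        qed
      qed
    qed
    then show ?thesis unfolding goal .
  qed
  show ?thesis using C0 main by blast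
qed




theorem theorem4p1:
  fixes a \<alpha> \<beta> :: real and f :: "real \<Rightarrow> real"
  assumes "a \<ge> 0" and "0 \<le> \<alpha>" and "\<alpha> \<le> \<beta>"
    and "f \<in> C_rho_k"
  shows "(\<forall>\<^sub>F n in sequentially.
            bdd_above ((\<lambda>x. \<bar>T_op n a \<alpha> \<beta> f x - f x\<bar> / rho x) ` {0..}))
       \<and> (\<lambda>n. rho_norm (\<lambda>x. T_op n a \<alpha> \<beta> f x - f x)) \<longlonglongrightarrow> 0"
proof -
  note a0 = assms(1) and al = assms(2) and ab = assms(3)
  have b0: "\<beta> \<ge> 0" using al ab by simp
  from assms(4) obtain M L where M: "\<And>x. x \<ge> 0 \<Longrightarrow> \<bar>f x\<bar> \<le> M * rho x"
    and cf: "continuous_on {0..} f" and fl: "((\<lambda>x. f x / rho x) \<longlongrightarrow> L) at_top"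
    unfolding C_rho_k_def C_rho_def B_rho_def by auto
  have rho_eq: "rho = (\<lambda>t. 1 + t^2)" by (rule ext) (simp add: rho_def)
  define h where "h t = f t - L * rho t" for t
  have ch: "continuous_on {0..} h" unfolding h_def rho_eq by (intro continuous_intros cf)
  have hl: "((\<lambda>t. h t / rho t) \<longlongrightarrow> 0) at_top"
  proof -
    have "((\<lambda>t. f t / rho t - L) \<longlongrightarrow> L - L) at_top" by (intro tendsto_diff fl tendsto_const)
    moreover have "(\<lambda>t. f t / rho t - L) = (\<lambda>t. h t / rho t)"
    proof (rule ext)
      fix t
      have nz: "rho t \<noteq> 0" using rho_pos(1)[of t] by simp
      show "f t / rho t - L = h t / rho t" unfolding h_def using nz by (simp add: diff_divide_distrib)
    qed
    ultimately show ?thesis by simp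
  qed
  define K1 where "K1 = \<alpha> + 1 + a + \<beta>"
  define K2 where "K2 = (3 * \<alpha>^2 + 3 * \<alpha> + 1) / 3 + (2 * \<alpha> + 1) * (1 + a) + 2 * \<beta> + \<beta>^2 + 3 * a + a^2 + 2"
  have K0: "K1 \<ge> 0" "K2 \<ge> 0" unfolding K1_def K2_def using al a0 b0 by auto
  have key: "\<exists>C. \<forall>n\<ge>1. \<forall>x\<ge>0. \<bar>T_op n a \<alpha> \<beta> f x - f x\<bar> \<le> (3 * \<epsilon> + C / real n) * rho x"
    if e0: "\<epsilon> > 0" for \<epsilon>
  proof -
    obtain C0 where C00: "C0 \<ge> 0" and hC: "\<And>x t. x \<ge> 0 \<Longrightarrow> t \<ge> 0 \<Longrightarrow> \<bar>h t - h x\<bar> \<le> 3 * \<epsilon> * rho x + C0 * (t - x)^2"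
      using h_est[OF ch hl e0] by blast
    define C where "C = C0 * (K2 + 2 * K1) + \<bar>L\<bar> * K2"
    have "\<bar>T_op n a \<alpha> \<beta> f x - f x\<bar> \<le> (3 * \<epsilon> + C / real n) * rho x" if n1: "n \<ge> 1" and x0: "x \<ge> 0" for n x
    proof -
      have N0: "real n + \<beta> > 0" using n1 b0 by simp
      define m1 where "m1 = mom1 n a \<alpha> \<beta> x"
      define m2 where "m2 = mom2 n a \<alpha> \<beta> x"
      define \<phi>1 where "\<phi>1 t = h t - h x" for t
      define \<phi>2 where "\<phi>2 = (\<lambda>t::real. (- L * x^2) + 0 * t + L * t^2)"
      define \<psi> where "\<psi> = (\<lambda>t::real. f x + 0 * t + 0 * t^2)"
      have c1: "continuous_on {0..} \<phi>1" unfolding \<phi>1_def by (intro continuous_intros ch)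
      have c2: "continuous_on {0..} \<phi>2" unfolding \<phi>2_def by (intro continuous_intros)
      have c3: "continuous_on {0..} \<psi>" unfolding \<psi>_def by (intro continuous_intros)
      have c12: "continuous_on {0..} (\<lambda>t. \<phi>1 t + \<phi>2 t)" using c1 c2 by (intro continuous_intros)
      have b1: "\<bar>\<phi>1 t\<bar> \<le> (3 * \<epsilon> * rho x + C0 * x^2) + (- 2 * C0 * x) * t + C0 * t^2" if "t \<ge> 0" for t
        using hC[OF x0 that] unfolding \<phi>1_def by (simp add: power2_eq_square algebra_simps)
      have b2: "\<bar>\<phi>2 t\<bar> \<le> \<bar>L\<bar> * x^2 + 0 * t + \<bar>L\<bar> * t^2" for t
      proof -
        have "\<bar>(- L * x^2) + L * t^2\<bar> \<le> \<bar>- L * x^2\<bar> + \<bar>L * t^2\<bar>" by (rule abs_triangle_ineq)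
        then show ?thesis unfolding \<phi>2_def by (simp add: abs_mult)
      qed
      have b12: "\<bar>\<phi>1 t + \<phi>2 t\<bar> \<le> (3 * \<epsilon> * rho x + C0 * x^2 + \<bar>L\<bar> * x^2) + (- 2 * C0 * x) * t + (C0 + \<bar>L\<bar>) * t^2"
        if "t \<ge> 0" for t
      proof -
        have "\<bar>\<phi>1 t + \<phi>2 t\<bar> \<le> \<bar>\<phi>1 t\<bar> + \<bar>\<phi>2 t\<bar>" by (rule abs_triangle_ineq)
        then show ?thesis using b1[OF that] b2[of t] by (simp add: algebra_simps)
      qed
      note T1 = T_cmp[OF N0 al a0 x0 c1 b1]
      note T12 = T_cmp[OF N0 al a0 x0 c12 b12]
      have s2: "summable (\<lambda>k. W_basis n k a x * integral {(real k + \<alpha>) / (real n + \<beta>) .. (real k + \<alpha> + 1) / (real n + \<beta>)} \<phi>2)"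
        unfolding \<phi>2_def by (rule sums_summable[OF T_quad(1)[OF N0 a0 x0]])
      have s3: "summable (\<lambda>k. W_basis n k a x * integral {(real k + \<alpha>) / (real n + \<beta>) .. (real k + \<alpha> + 1) / (real n + \<beta>)} \<psi>)"
        unfolding \<psi>_def by (rule sums_summable[OF T_quad(1)[OF N0 a0 x0]])
      have Tphi2: "T_op n a \<alpha> \<beta> \<phi>2 x = L * (m2 - x^2)"
        unfolding \<phi>2_def T_quad(2)[OF N0 a0 x0] m2_def by (simp add: algebra_simps)
      have Tpsi: "T_op n a \<alpha> \<beta> \<psi> x = f x"
        unfolding \<psi>_def T_quad(2)[OF N0 a0 x0] by simp
      have feq: "f = (\<lambda>t. (\<phi>1 t + \<phi>2 t) + \<psi> t)"
        by (rule ext) (simp add: \<phi>1_def \<phi>2_def \<psi>_def h_def rho_def algebra_simps)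
      have "T_op n a \<alpha> \<beta> f x = T_op n a \<alpha> \<beta> (\<lambda>t. \<phi>1 t + \<phi>2 t) x + T_op n a \<alpha> \<beta> \<psi> x"
        by (subst feq, rule T_add[OF N0 al c12 c3 T12(1) s3])
      also have "T_op n a \<alpha> \<beta> (\<lambda>t. \<phi>1 t + \<phi>2 t) x = T_op n a \<alpha> \<beta> \<phi>1 x + T_op n a \<alpha> \<beta> \<phi>2 x"
        by (rule T_add[OF N0 al c1 c2 T1(1) s2])
      finally have Tf: "T_op n a \<alpha> \<beta> f x - f x = T_op n a \<alpha> \<beta> \<phi>1 x + L * (m2 - x^2)"
        using Tphi2 Tpsi by simp
      have bT1: "\<bar>T_op n a \<alpha> \<beta> \<phi>1 x\<bar> \<le> 3 * \<epsilon> * rho x + C0 * ((m2 - x^2) - 2 * (x * (m1 - x)))"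
        using T1(2) unfolding m1_def[symmetric] m2_def[symmetric] by (simp add: algebra_simps power2_eq_square)
      have mb1: "\<bar>x * (m1 - x)\<bar> \<le> K1 * rho x / real n" and mb2: "\<bar>m2 - x^2\<bar> \<le> K2 * rho x / real n"
        using mom_bounds[OF n1 a0 al ab x0] unfolding m1_def m2_def K1_def K2_def rho_def by auto
      have "(m2 - x^2) - 2 * (x * (m1 - x)) \<le> K2 * rho x / real n + 2 * (K1 * rho x / real n)"
        using mb1 mb2 unfolding abs_le_iff by linarith
      then have "C0 * ((m2 - x^2) - 2 * (x * (m1 - x))) \<le> C0 * (K2 * rho x / real n + 2 * (K1 * rho x / real n))"
        using C00 by (rule mult_left_mono)
      moreover have "\<bar>L * (m2 - x^2)\<bar> \<le> \<bar>L\<bar> * (K2 * rho x / real n)"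
      proof -
        have "\<bar>L\<bar> * \<bar>m2 - x^2\<bar> \<le> \<bar>L\<bar> * (K2 * rho x / real n)" using mb2 by (rule mult_left_mono) simp
        then show ?thesis by (simp add: abs_mult)
      qed
      moreover have "C0 * (K2 * rho x / real n + 2 * (K1 * rho x / real n)) + \<bar>L\<bar> * (K2 * rho x / real n) = C / real n * rho x"
        unfolding C_def by (simp add: algebra_simps add_divide_distrib)
      ultimately have "\<bar>T_op n a \<alpha> \<beta> f x - f x\<bar> \<le> 3 * \<epsilon> * rho x + C / real n * rho x"
        unfolding Tf using bT1 by linarith
      then show ?thesis by (simp add: algebra_simps)
    qed
    then show ?thesis by blast
  qed
  define g where "g n x = T_op n a \<alpha> \<beta> f x - f x" for n x
  have bdd: "bdd_above ((\<lambda>x. \<bar>g n x\<bar> / rho x) ` {0..})" 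
    and le: "rho_norm (g n) \<le> 3 * \<epsilon> + C / real n" 
    and ge: "rho_norm (g n) \<ge> 0"
    if "\<forall>n\<ge>1. \<forall>x\<ge>0. \<bar>T_op n a \<alpha> \<beta> f x - f x\<bar> \<le> (3 * \<epsilon> + C / real n) * rho x" "n \<ge> 1" for n \<epsilon> C
  proof -
    have b: "\<bar>g n x\<bar> / rho x \<le> 3 * \<epsilon> + C / real n" if "x \<in> {0..}" for x
      using \<open>\<forall>n\<ge>1. _\<close> \<open>n \<ge> 1\<close> that rho_pos[of x] unfolding g_def by (simp add: divide_le_eq)
    show bd: "bdd_above ((\<lambda>x. \<bar>g n x\<bar> / rho x) ` {0..})" by (rule bdd_aboveI2) (rule b)
    show "rho_norm (g n) \<le> 3 * \<epsilon> + C / real n" unfolding rho_norm_def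
      by (rule cSUP_least) (use b in auto)
    show "rho_norm (g n) \<ge> 0" unfolding rho_norm_def
      by (rule cSUP_upper2[OF bd, of 0]) (use rho_pos(1)[of 0] in \<open>auto intro: divide_nonneg_pos\<close>)
  qed
  have part1: "\<forall>\<^sub>F n in sequentially. bdd_above ((\<lambda>x. \<bar>T_op n a \<alpha> \<beta> f x - f x\<bar> / rho x) ` {0..})"
  proof -
    obtain C where C: "\<forall>n\<ge>1. \<forall>x\<ge>0. \<bar>T_op n a \<alpha> \<beta> f x - f x\<bar> \<le> (3 * 1 + C / real n) * rho x"
      using key[of 1] by auto
    show ?thesis unfolding eventually_sequentially using bdd[OF C] unfolding g_def by blast
  qed
  have part2: "(\<lambda>n. rho_norm (g n)) \<longlonglongrightarrow> 0"
  proof (rule LIMSEQ_I)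
    fix r :: real assume r0: "r > 0"
    obtain C where C: "\<forall>n\<ge>1. \<forall>x\<ge>0. \<bar>T_op n a \<alpha> \<beta> f x - f x\<bar> \<le> (3 * (r / 6) + C / real n) * rho x"
      using key[of "r / 6"] r0 by auto
    define no where "no = nat \<lceil>2 * \<bar>C\<bar> / r\<rceil> + 1"
    have "norm (rho_norm (g n) - 0) < r" if "n \<ge> no" for n
    proof -
      have n1: "n \<ge> 1" using that unfolding no_def by simp
      have "real n > 2 * \<bar>C\<bar> / r" using that unfolding no_def by linarith
      then have "2 * \<bar>C\<bar> < r * real n" using r0 by (simp add: field_simps)
      then have "\<bar>C\<bar> / real n < r / 2" using n1 by (simp add: field_simps)
      moreover have "C / real n \<le> \<bar>C\<bar> / real n" by (simp add: divide_right_mono)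
      ultimately have "C / real n < r / 2" by linarith
      moreover have "3 * (r / 6) = r / 2" by simp
      ultimately show ?thesis using le[OF C n1] ge[OF C n1] by (simp only: real_norm_def diff_0_right)
    qed
    then show "\<exists>no. \<forall>n\<ge>no. norm (rho_norm (g n) - 0) < r" by blast
  qed
  show ?thesis using part1 part2 unfolding g_def by simp
qed


end
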